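(* Let $m\ge4$. Let $A$ be the $m\times m$ coloring matrix whose rows $1$ and $2$ are zero, whose rows $3,4,\dots,m-1$ each have a single $1$ in column $2$ and zeros elsewhere, and whose row $m$ has ones in columns $1$ and $2$ and zeros elsewhere. Let $B$ be the $m\times m$ coloring matrix whose row $1$ is zero, whose rows $2$ and $3$ each have a single $1$ in column $m$ and zeros elsewhere, and whose rows $4,\dots,m$ each have a single $1$ in column $1$ and zeros elsewhere. Then for all $n\ge2$, $t_A(n)=t_B(n)=2^{n-1}+m-3$ (and $t_A(1)=t_B(1)=m$). However, $A$ and $B$ are not strongly tree coloring equivalent.
   Context: A plane tree is an unlabeled rooted tree in which the children of every vertex are linearly ordered. A coloring matrix is an $m\times m$ matrix $A=(a_{ij})$ with entries in $\{0,1\}$. An $A$-coloring of a plane tree assigns to each vertex a color in $\{1,\dots,m\}$ such that whenever a vertex of color $j$ is a child of a vertex of color $i$, $a_{ij}=1$. Let $t_A(n)$ be the number of pairs (plane tree with $n$ vertices, $A$-coloring of it) and $t_A^{(i)}(n)$ the number of those with root color $i$. Two $m\times m$ coloring matrices $A,B$ are strictly tree coloring equivalent if $t_A^{(i)}(n)=t_B^{(i)}(n)$ for all $n\ge1$ and all $i$; they are strongly tree coloring equivalent if there is an $m\times m$ permutation matrix $P$ such that $P^TAP$ and $B$ are strictly tree coloring equivalent. *)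

theory Defs
  imports "HOL-Combinatorics.Permutations"
begin

datatype ctree = CNode nat "ctree list"

fun root_col :: "ctree \<Rightarrow> nat" where
  "root_col (CNode c ts) = c"

fun nverts :: "ctree \<Rightarrow> nat" where
  "nverts (CNode c ts) = 1 + sum_list (map nverts ts)"

text \<open>Coloring matrices of size m: functions nat => nat => nat, indices 1..m,
  entries in {0,1}.  A-coloring: every color in {1..m}, and a child of color j
  of a vertex of color i requires a_ij = 1.\<close>
fun valid_col :: "nat \<Rightarrow> (nat \<Rightarrow> nat \<Rightarrow> nat) \<Rightarrow> ctree \<Rightarrow> bool" where
  "valid_col m A (CNode c ts) =
     (1 \<le> c \<and> c \<le> m \<and> (\<forall>t\<in>set ts. A c (root_col t) = 1 \<and> valid_col m A t))"

definition coloring_matrix :: "nat \<Rightarrow> (nat \<Rightarrow> nat \<Rightarrow> nat) \<Rightarrow> bool" where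
  "coloring_matrix m A \<longleftrightarrow> (\<forall>i\<in>{1..m}. \<forall>j\<in>{1..m}. A i j \<in> {0,1})"

definition t_col :: "nat \<Rightarrow> (nat \<Rightarrow> nat \<Rightarrow> nat) \<Rightarrow> nat \<Rightarrow> nat" where
  "t_col m A n = card {T. valid_col m A T \<and> nverts T = n}"

definition t_col_root :: "nat \<Rightarrow> (nat \<Rightarrow> nat \<Rightarrow> nat) \<Rightarrow> nat \<Rightarrow> nat \<Rightarrow> nat" where
  "t_col_root m A i n = card {T. valid_col m A T \<and> nverts T = n \<and> root_col T = i}"

definition strictly_tc_equiv :: "nat \<Rightarrow> (nat \<Rightarrow> nat \<Rightarrow> nat) \<Rightarrow> (nat \<Rightarrow> nat \<Rightarrow> nat) \<Rightarrow> bool" where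
  "strictly_tc_equiv m A B \<longleftrightarrow>
     (\<forall>n\<ge>1. \<forall>i\<in>{1..m}. t_col_root m A i n = t_col_root m B i n)"

text \<open>P^T A P for the permutation matrix P of a permutation s of {1..m} has
  (i,j) entry A (s i) (s j).\<close>
definition strongly_tc_equiv :: "nat \<Rightarrow> (nat \<Rightarrow> nat \<Rightarrow> nat) \<Rightarrow> (nat \<Rightarrow> nat \<Rightarrow> nat) \<Rightarrow> bool" where
  "strongly_tc_equiv m A B \<longleftrightarrow>
     (\<exists>s. s permutes {1..m} \<and> strictly_tc_equiv m (\<lambda>i j. A (s i) (s j)) B)"

definition matA :: "nat \<Rightarrow> nat \<Rightarrow> nat \<Rightarrow> nat" where
  "matA m i j = (if (3 \<le> i \<and> i \<le> m - 1 \<and> j = 2) \<or> (i = m \<and> (j = 1 \<or> j = 2)) then 1 else 0)"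

definition matB :: "nat \<Rightarrow> nat \<Rightarrow> nat \<Rightarrow> nat" where
  "matB m i j = (if ((i = 2 \<or> i = 3) \<and> j = m) \<or> (4 \<le> i \<and> i \<le> m \<and> j = 1) then 1 else 0)"

end

theory Submission
  imports Defs
begin

lemma nverts_pos: "nverts t \<ge> 1"
  by (cases t) auto

lemma valid_root: "valid_col m M t \<Longrightarrow> 1 \<le> root_col t \<and> root_col t \<le> m"
  by (cases t) auto

lemma leaf_zero:
  assumes "valid_col m M (CNode c us)" "\<And>j. M c j = 0"
  shows "us = []"
proof (rule ccontr)
  assume "us \<noteq> []"
  then have "hd us \<in> set us" by simp
  with assms show False by auto
qed

lemma nverts1: "nverts t = 1 \<longleftrightarrow> (\<exists>c. t = CNode c [])"
proof (cases t)
  case (CNode c ts)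
  have "sum_list (map nverts ts) = 0 \<longleftrightarrow> ts = []"
  proof
    assume h: "sum_list (map nverts ts) = 0"
    show "ts = []"
    proof (rule ccontr)
      assume "ts \<noteq> []"
      then obtain x r where "ts = x # r" by (cases ts) auto
      with h nverts_pos[of x] show False by simp
    qed
  qed simp
  then show ?thesis using CNode by auto
qed

lemma sum_leaves: "sum_list (map nverts (map (\<lambda>c. CNode c []) xs)) = length xs"
  by (induction xs) auto

lemma sum_leaves2: "sum_list (map (nverts \<circ> (\<lambda>c. CNode c [])) xs) = length xs"
  by (induction xs) auto

lemma sum_rep: "sum_list (map nverts (replicate k (CNode c []))) = k"
  by (induction k) auto

lemma tcol1: "t_col m M 1 = m"
proof -
  have "{T. valid_col m M T \<and> nverts T = 1} = (\<lambda>c. CNode c []) ` {1..m}"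
    using nverts1 by fastforce
  moreover have "inj_on (\<lambda>c. CNode c []) {1..m}" by (auto simp: inj_on_def)
  ultimately show ?thesis unfolding t_col_def by (simp add: card_image)
qed

lemma all_leaves_map:
  "\<forall>t\<in>set ts. t = CNode (root_col t) [] \<Longrightarrow> map (\<lambda>c. CNode c []) (map root_col ts) = ts"
  by (induction ts) auto

definition starT :: "nat \<Rightarrow> nat \<Rightarrow> nat \<Rightarrow> ctree" where
  "starT c d n = CNode c (replicate (n - 1) (CNode d []))"

lemma matA_leaf: "m \<ge> 4 \<Longrightarrow> c \<le> 2 \<Longrightarrow> matA m c j = 0"
  by (auto simp: matA_def)

lemma matA_one: "matA m i j = 1 \<Longrightarrow> (3 \<le> i \<and> i \<le> m-1 \<and> j = 2) \<or> (i = m \<and> (j=1 \<or> j=2))"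
  unfolding matA_def by (metis zero_neq_one)

lemma A_char:
  assumes m: "m \<ge> 4" and n: "n \<ge> 2"
  shows "(valid_col m (matA m) T \<and> nverts T = n) \<longleftrightarrow>
     ((\<exists>c\<in>{3..m-1}. T = starT c 2 n) \<or>
      (\<exists>xs. length xs = n - 1 \<and> set xs \<subseteq> {1,2} \<and> T = CNode m (map (\<lambda>c. CNode c []) xs)))"
proof
  assume h: "valid_col m (matA m) T \<and> nverts T = n"
  obtain c ts where T: "T = CNode c ts" by (cases T)
  have ne: "ts \<noteq> []" using h n T by auto
  then obtain t0 where t0: "t0 \<in> set ts" by (cases ts) auto
  have vc: "1 \<le> c" "c \<le> m" "\<forall>t\<in>set ts. matA m c (root_col t) = 1 \<and> valid_col m (matA m) t"
    using h T by auto
  have c3: "c \<ge> 3"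
  proof (rule ccontr)
    assume "\<not> c \<ge> 3"
    then have "matA m c (root_col t0) = 0" using matA_leaf[OF m] by simp
    with vc t0 show False by auto
  qed
  have chl: "\<forall>t\<in>set ts. t = CNode (root_col t) [] \<and> root_col t \<in> {1,2}"
  proof
    fix t assume t: "t \<in> set ts"
    obtain d us where td: "t = CNode d us" by (cases t)
    have "matA m c d = 1" "valid_col m (matA m) (CNode d us)" using vc t td by auto
    then have d: "d \<in> {1,2}" using matA_one by blast
    then have "us = []" using leaf_zero[OF \<open>valid_col m (matA m) (CNode d us)\<close>] matA_leaf[OF m] by auto
    then show "t = CNode (root_col t) [] \<and> root_col t \<in> {1,2}" using td d by simp
  qed
  have sl: "sum_list (map nverts ts) = length ts"
    using all_leaves_map[of ts] chl sum_leaves[of "map root_col ts"] by auto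
  then have len: "length ts = n - 1" using h T by auto
  show "(\<exists>c\<in>{3..m-1}. T = starT c 2 n) \<or>
      (\<exists>xs. length xs = n - 1 \<and> set xs \<subseteq> {1,2} \<and> T = CNode m (map (\<lambda>c. CNode c []) xs))"
  proof (cases "c = m")
    case True
    have "map (\<lambda>c. CNode c []) (map root_col ts) = ts" using all_leaves_map chl by auto
    moreover have "set (map root_col ts) \<subseteq> {1,2}" using chl by auto
    ultimately show ?thesis using True T len by (intro disjI2 exI[of _ "map root_col ts"]) auto
  next
    case False
    then have cm: "c \<le> m - 1" using vc by simp
    have "\<forall>t\<in>set ts. t = CNode 2 []"
    proof
      fix t assume t: "t \<in> set ts"
      have "matA m c (root_col t) = 1" using vc t by auto
      then have "root_col t = 2" using False matA_one by blast
      then show "t = CNode 2 []" using chl t by metis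
    qed
    then have "ts = replicate (n - 1) (CNode 2 [])" using len replicate_length_same by metis
    then show ?thesis using T c3 cm by (auto simp: starT_def)
  qed
next
  assume "(\<exists>c\<in>{3..m-1}. T = starT c 2 n) \<or>
      (\<exists>xs. length xs = n - 1 \<and> set xs \<subseteq> {1,2} \<and> T = CNode m (map (\<lambda>c. CNode c []) xs))"
  then show "valid_col m (matA m) T \<and> nverts T = n"
  proof
    assume "\<exists>c\<in>{3..m-1}. T = starT c 2 n"
    then obtain c where "c \<in> {3..m-1}" "T = starT c 2 n" by blast
    then show ?thesis using m n by (auto simp: starT_def matA_def sum_list_replicate)
  next
    assume "\<exists>xs. length xs = n - 1 \<and> set xs \<subseteq> {1,2} \<and> T = CNode m (map (\<lambda>c. CNode c []) xs)"
    then obtain xs where xs: "length xs = n - 1" "set xs \<subseteq> {1,2}" "T = CNode m (map (\<lambda>c. CNode c []) xs)" by blast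
    have "\<forall>x\<in>set xs. x = 1 \<or> x = 2" using xs(2) by auto
    then show ?thesis using m n xs by (auto simp: matA_def sum_leaves2)
  qed
qed


definition compo :: "nat \<Rightarrow> nat list set" where
  "compo N = {ps. (\<forall>p\<in>set ps. 0 < p) \<and> sum_list ps = N}"

fun incr :: "nat list \<Rightarrow> nat list" where
  "incr [] = []" | "incr (k # r) = Suc k # r"

lemma compo_finite: "finite (compo N)"
proof -
  have "compo N \<subseteq> {ps. set ps \<subseteq> {0..N} \<and> length ps \<le> N}"
  proof
    fix ps assume h: "ps \<in> compo N"
    have "\<forall>p\<in>set ps. p \<le> sum_list ps" by (simp add: member_le_sum_list)
    moreover have "length ps \<le> sum_list ps" using h unfolding compo_def
    proof (induction ps arbitrary: N)
      case (Cons a ps)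
      then show ?case by fastforce
    qed simp
    ultimately show "ps \<in> {ps. set ps \<subseteq> {0..N} \<and> length ps \<le> N}" using h
      unfolding compo_def by auto
  qed
  then show ?thesis using finite_lists_length_le[of "{0..N}" N] finite_subset by blast
qed

lemma compo_1: "compo 1 = {[1]}"
proof -
  have "ps = [1]" if "(\<forall>p\<in>set ps. 0 < p) \<and> sum_list ps = 1" for ps :: "nat list"
    using that
  proof (cases ps)
    case (Cons a r)
    have "a + sum_list r = 1" "a > 0" "\<forall>p\<in>set r. 0 < p" using that Cons by auto
    moreover have "r = []"
    proof (rule ccontr)
      assume "r \<noteq> []"
      then obtain b l where "r = b # l" by (cases r) auto
      then have "a + (b + sum_list l) = 1" "b > 0" using calculation by auto
      then show False using calculation(2) by linarith
    qed
    ultimately show ?thesis using Cons by simp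
  qed simp
  then show ?thesis unfolding compo_def by auto
qed

lemma compo_ne: "N \<ge> 1 \<Longrightarrow> ps \<in> compo N \<Longrightarrow> ps \<noteq> []"
  unfolding compo_def by auto

lemma compo_Suc:
  assumes "N \<ge> 1"
  shows "compo (Suc N) = Cons 1 ` compo N \<union> incr ` compo N"
proof
  show "compo (Suc N) \<subseteq> Cons 1 ` compo N \<union> incr ` compo N"
  proof
    fix ps assume h: "ps \<in> compo (Suc N)"
    then obtain p r where ps: "ps = p # r" unfolding compo_def by (cases ps) auto
    show "ps \<in> Cons 1 ` compo N \<union> incr ` compo N"
    proof (cases "p = 1")
      case True
      then have "r \<in> compo N" using h ps unfolding compo_def by auto
      then show ?thesis using ps True by auto
    next
      case False
      then have p: "p \<ge> 2" using h ps unfolding compo_def by auto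
      then have "(p - 1) # r \<in> compo N" using h ps unfolding compo_def by auto
      moreover have "incr ((p - 1) # r) = ps" using p ps by simp
      ultimately show ?thesis by (metis UnI2 image_eqI)
    qed
  qed
next
  show "Cons 1 ` compo N \<union> incr ` compo N \<subseteq> compo (Suc N)"
  proof
    fix ps assume "ps \<in> Cons 1 ` compo N \<union> incr ` compo N"
    then show "ps \<in> compo (Suc N)"
    proof
      assume "ps \<in> Cons 1 ` compo N"
      then show ?thesis unfolding compo_def by auto
    next
      assume "ps \<in> incr ` compo N"
      then obtain qs where qs: "qs \<in> compo N" "ps = incr qs" by blast
      then obtain q r where "qs = q # r" using assms unfolding compo_def by (cases qs) auto
      then show ?thesis using qs unfolding compo_def by auto
    qed
  qed
qed

lemma compo_card: "N \<ge> 1 \<Longrightarrow> card (compo N) = 2 ^ (N - 1)"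
proof (induction N rule: nat_induct_at_least)
  case base
  then show ?case using compo_1 by simp
next
  case (Suc N)
  have i1: "inj_on (Cons 1) (compo N)" by simp
  have i2: "inj_on incr (compo N)"
  proof (rule inj_onI)
    fix x y assume "x \<in> compo N" "y \<in> compo N" "incr x = incr y"
    moreover have "x \<noteq> []" "y \<noteq> []" using calculation(1,2) Suc(1) compo_ne by auto
    ultimately show "x = y" by (cases x; cases y) auto
  qed
  have d: "Cons 1 ` compo N \<inter> incr ` compo N = {}"
  proof -
    have "incr qs \<noteq> 1 # r" if "qs \<in> compo N" for qs r
      using that Suc(1) unfolding compo_def by (cases qs) auto
    then show ?thesis by (smt (verit) disjoint_iff imageE)
  qed
  have "card (compo (Suc N)) = card (Cons 1 ` compo N) + card (incr ` compo N)"
    using compo_Suc[OF Suc(1)] d compo_finite by (simp add: card_Un_disjoint)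
  also have "\<dots> = 2 * 2 ^ (N - 1)" using i1 i2 Suc(2) by (simp add: card_image)
  also have "\<dots> = 2 ^ (Suc N - 1)" using Suc(1) by (cases N) auto
  finally show ?case .
qed

definition gT :: "nat \<Rightarrow> nat \<Rightarrow> ctree" where
  "gT m k = CNode m (replicate k (CNode 1 []))"

lemma nverts_gT: "nverts (gT m k) = Suc k"
  by (simp add: gT_def sum_list_replicate)

lemma sum_gT: "\<forall>p\<in>set ps. 0 < p \<Longrightarrow> sum_list (map (\<lambda>p. nverts (gT m (p - 1))) ps) = sum_list ps"
  by (induction ps) (auto simp: nverts_gT)

lemma matB_one: "matB m i j = 1 \<Longrightarrow> ((i=2 \<or> i=3) \<and> j = m) \<or> (4 \<le> i \<and> i \<le> m \<and> j = 1)"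
  unfolding matB_def by (metis zero_neq_one)

lemma matB_leaf: "m \<ge> 4 \<Longrightarrow> matB m 1 j = 0"
  by (auto simp: matB_def)

lemma leaf1B:
  assumes m: "m \<ge> 4" and v: "valid_col m (matB m) t" and r: "root_col t = 1"
  shows "t = CNode 1 []"
proof -
  obtain d us where t: "t = CNode d us" by (cases t)
  then have "d = 1" using r by simp
  then have "us = []" using leaf_zero[of m "matB m" d us] v t matB_leaf[OF m] by auto
  then show ?thesis using t \<open>d = 1\<close> by simp
qed

lemma B_char:
  assumes m: "m \<ge> 4" and n: "n \<ge> 2"
  shows "(valid_col m (matB m) T \<and> nverts T = n) \<longleftrightarrow>
     ((\<exists>c\<in>{4..m}. T = starT c 1 n) \<or>
      (\<exists>c\<in>{2,3}. \<exists>ps\<in>compo (n - 1). T = CNode c (map (\<lambda>p. gT m (p - 1)) ps)))"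
proof
  assume h: "valid_col m (matB m) T \<and> nverts T = n"
  obtain c ts where T: "T = CNode c ts" by (cases T)
  have ne: "ts \<noteq> []" using h n T by auto
  then obtain t0 where t0: "t0 \<in> set ts" by (cases ts) auto
  have vc: "1 \<le> c" "c \<le> m" "\<forall>t\<in>set ts. matB m c (root_col t) = 1 \<and> valid_col m (matB m) t"
    using h T by auto
  have sumn: "sum_list (map nverts ts) = n - 1" using h T by auto
  have c2: "(c = 2 \<or> c = 3) \<or> (4 \<le> c \<and> c \<le> m)" using matB_one vc t0 by blast
  show "(\<exists>c\<in>{4..m}. T = starT c 1 n) \<or>
      (\<exists>c\<in>{2,3}. \<exists>ps\<in>compo (n - 1). T = CNode c (map (\<lambda>p. gT m (p - 1)) ps))"
  proof (cases "c = 2 \<or> c = 3")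
    case True
    have ch: "t = gT m (nverts t - 1)" if t: "t \<in> set ts" for t
    proof -
      obtain d us where td: "t = CNode d us" by (cases t)
      have "matB m c d = 1" "valid_col m (matB m) (CNode d us)" using vc t td by auto
      then have d: "d = m" using matB_one True by fastforce
      have "\<forall>u\<in>set us. u = CNode 1 []"
      proof
        fix u assume u: "u \<in> set us"
        have "matB m m (root_col u) = 1" "valid_col m (matB m) u"
          using \<open>valid_col m (matB m) (CNode d us)\<close> d u by auto
        then have "root_col u = 1" using matB_one m by fastforce
        then show "u = CNode 1 []" using leaf1B[OF m] \<open>valid_col m (matB m) u\<close> by blast
      qed
      then have "us = replicate (length us) (CNode 1 [])" using replicate_length_same by metis
      then have "t = gT m (length us)" using td d by (simp add: gT_def)
      then show ?thesis by (simp add: nverts_gT)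
    qed
    have "map (\<lambda>p. gT m (p - 1)) (map nverts ts) = ts"
      using ch by (simp add: map_idI)
    moreover have "map nverts ts \<in> compo (n - 1)"
      using sumn nverts_pos unfolding compo_def by (auto simp: Suc_le_eq)
    ultimately show ?thesis using True T by force
  next
    case False
    then have c4: "4 \<le> c" "c \<le> m" using c2 by auto
    have "\<forall>t\<in>set ts. t = CNode 1 []"
    proof
      fix t assume t: "t \<in> set ts"
      have "matB m c (root_col t) = 1" "valid_col m (matB m) t" using vc t by auto
      then have "root_col t = 1" using matB_one False by blast
      then show "t = CNode 1 []" using leaf1B[OF m] \<open>valid_col m (matB m) t\<close> by blast
    qed
    then have r: "ts = replicate (length ts) (CNode 1 [])" using replicate_length_same by metis
    then have "sum_list (map nverts ts) = length ts" by (metis sum_rep)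
    then have "ts = replicate (n - 1) (CNode 1 [])" using r sumn by metis
    then show ?thesis using T c4 by (auto simp: starT_def)
  qed
next
  assume "(\<exists>c\<in>{4..m}. T = starT c 1 n) \<or>
      (\<exists>c\<in>{2,3}. \<exists>ps\<in>compo (n - 1). T = CNode c (map (\<lambda>p. gT m (p - 1)) ps))"
  then show "valid_col m (matB m) T \<and> nverts T = n"
  proof
    assume "\<exists>c\<in>{4..m}. T = starT c 1 n"
    then obtain c where "c \<in> {4..m}" "T = starT c 1 n" by blast
    then show ?thesis using m n by (auto simp: starT_def matB_def sum_list_replicate)
  next
    assume "\<exists>c\<in>{2,3}. \<exists>ps\<in>compo (n - 1). T = CNode c (map (\<lambda>p. gT m (p - 1)) ps)"
    then obtain c ps where cps: "c \<in> {2,3}" "ps \<in> compo (n - 1)" "T = CNode c (map (\<lambda>p. gT m (p - 1)) ps)"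
      by blast
    have pos: "\<forall>p\<in>set ps. 0 < p" and s: "sum_list ps = n - 1" using cps(2) unfolding compo_def by auto
    have vg: "valid_col m (matB m) (gT m k)" for k using m by (auto simp: gT_def matB_def)
    have "matB m c m = 1" using cps(1) by (auto simp: matB_def)
    moreover have "root_col (gT m k) = m" for k by (simp add: gT_def)
    ultimately have "valid_col m (matB m) T" using cps(1,3) vg m by auto
    moreover have "nverts T = n" using cps(3) sum_gT[OF pos, of m] s n
      by (simp add: comp_def)
    ultimately show ?thesis by simp
  qed
qed


lemma map_nverts_h: "\<forall>p\<in>set ps. 0 < p \<Longrightarrow> map nverts (map (\<lambda>p. gT m (p - 1)) ps) = ps"
  by (induction ps) (auto simp: nverts_gT)

lemma tA:
  assumes m: "m \<ge> 4" and n: "n \<ge> 2"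
  shows "t_col m (matA m) n = 2 ^ (n - 1) + m - 3"
proof -
  let ?L = "{xs. set xs \<subseteq> {1::nat,2} \<and> length xs = n - 1}"
  let ?S1 = "(\<lambda>c. starT c 2 n) ` {3..m-1}"
  let ?S2 = "(\<lambda>xs. CNode m (map (\<lambda>c. CNode c []) xs)) ` ?L"
  have eq: "{T. valid_col m (matA m) T \<and> nverts T = n} = ?S1 \<union> ?S2"
    using A_char[OF m n] by blast
  have i1: "inj_on (\<lambda>c. starT c 2 n) {3..m-1}" by (auto simp: inj_on_def starT_def)
  have i2: "inj_on (\<lambda>xs. CNode m (map (\<lambda>c. CNode c []) xs)) ?L"
    by (auto simp: inj_on_def inj_map_eq_map inj_def)
  have d: "?S1 \<inter> ?S2 = {}" using m by (auto simp: starT_def)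
  have fL: "finite ?L" using finite_lists_length_eq[of "{1::nat,2}" "n - 1"] by simp
  have cL: "card ?L = 2 ^ (n - 1)" using card_lists_length_eq[of "{1::nat,2}" "n - 1"] by (simp add: numeral_2_eq_2)
  have "t_col m (matA m) n = card ?S1 + card ?S2"
    unfolding t_col_def eq using d fL by (simp add: card_Un_disjoint)
  also have "\<dots> = (m - 3) + 2 ^ (n - 1)" using i1 i2 cL by (simp add: card_image)
  finally show ?thesis using m by simp
qed

lemma tB:
  assumes m: "m \<ge> 4" and n: "n \<ge> 2"
  shows "t_col m (matB m) n = 2 ^ (n - 1) + m - 3"
proof -
  let ?S1 = "(\<lambda>c. starT c 1 n) ` {4..m}"
  let ?f = "\<lambda>(c, ps). CNode c (map (\<lambda>p. gT m (p - 1)) ps)"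
  let ?S2 = "?f ` ({2,3} \<times> compo (n - 1))"
  have eq: "{T. valid_col m (matB m) T \<and> nverts T = n} = ?S1 \<union> ?S2"
  proof (rule set_eqI)
    fix T
    have "T \<in> ?S2 \<longleftrightarrow> (\<exists>c\<in>{2,3}. \<exists>ps\<in>compo (n - 1). T = CNode c (map (\<lambda>p. gT m (p - 1)) ps))"
    proof
      assume "T \<in> ?S2"
      then obtain x where "x \<in> {2,3} \<times> compo (n - 1)" "T = ?f x" by blast
      then show "\<exists>c\<in>{2,3}. \<exists>ps\<in>compo (n - 1). T = CNode c (map (\<lambda>p. gT m (p - 1)) ps)"
        by (cases x) auto
    next
      assume "\<exists>c\<in>{2,3}. \<exists>ps\<in>compo (n - 1). T = CNode c (map (\<lambda>p. gT m (p - 1)) ps)"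
      then obtain c ps where "c \<in> {2,3}" "ps \<in> compo (n - 1)" "T = CNode c (map (\<lambda>p. gT m (p - 1)) ps)"
        by blast
      then show "T \<in> ?S2" using rev_image_eqI[of "(c, ps)" "{2,3} \<times> compo (n - 1)" T ?f] by simp
    qed
    moreover have "T \<in> ?S1 \<longleftrightarrow> (\<exists>c\<in>{4..m}. T = starT c 1 n)" by blast
    ultimately show "T \<in> {T. valid_col m (matB m) T \<and> nverts T = n} \<longleftrightarrow> T \<in> ?S1 \<union> ?S2"
      using B_char[OF m n, of T] by simp
  qed
  have i1: "inj_on (\<lambda>c. starT c 1 n) {4..m}" by (auto simp: inj_on_def starT_def)
  have i2: "inj_on ?f ({2,3} \<times> compo (n - 1))"
  proof (rule inj_onI)
    fix x y assume x: "x \<in> {2,3} \<times> compo (n - 1)" and y: "y \<in> {2,3} \<times> compo (n - 1)"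
      and e: "?f x = ?f y"
    obtain c ps where xc: "x = (c, ps)" by (cases x)
    obtain c' ps' where yc: "y = (c', ps')" by (cases y)
    have "c = c'" "map (\<lambda>p. gT m (p - 1)) ps = map (\<lambda>p. gT m (p - 1)) ps'" using e xc yc by auto
    moreover have "\<forall>p\<in>set ps. 0 < p" "\<forall>p\<in>set ps'. 0 < p" using x y xc yc unfolding compo_def by auto
    ultimately have "ps = ps'" by (metis map_nverts_h)
    then show "x = y" using xc yc \<open>c = c'\<close> by simp
  qed
  have d: "?S1 \<inter> ?S2 = {}" by (auto simp: starT_def)
  have fS2: "finite ?S2" using compo_finite by simp
  have c2: "card ({2::nat,3} \<times> compo (n - 1)) = 2 ^ (n - 1)"
  proof -
    have "card ({2::nat,3} \<times> compo (n - 1)) = 2 * 2 ^ (n - 1 - 1)"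
      using compo_card[of "n - 1"] n by (simp add: card_cartesian_product)
    also have "\<dots> = 2 ^ (n - 1)" using n by (cases n) (auto simp: power_Suc[symmetric] simp del: power_Suc)
    finally show ?thesis .
  qed
  have "t_col m (matB m) n = card ?S1 + card ?S2"
    unfolding t_col_def eq using d fS2 by (simp add: card_Un_disjoint)
  also have "\<dots> = (m - 3) + 2 ^ (n - 1)" using i1 i2 c2 by (simp add: card_image)
  finally show ?thesis using m by simp
qed

fun relabel :: "(nat \<Rightarrow> nat) \<Rightarrow> ctree \<Rightarrow> ctree" where
  "relabel f (CNode c ts) = CNode (f c) (map (relabel f) ts)"

lemma root_relabel: "root_col (relabel f T) = f (root_col T)"
  by (cases T) auto

lemma nverts_relabel: "nverts (relabel f T) = nverts T"
proof (induction T)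
  case (CNode c ts)
  then have "map (nverts \<circ> relabel f) ts = map nverts ts" by auto
  from arg_cong[OF this, of sum_list] show ?case by simp
qed

lemma relabel_comp: "relabel f (relabel g T) = relabel (f \<circ> g) T"
  by (induction T) auto

lemma relabel_id: "relabel id T = T"
proof (induction T)
  case (CNode c ts)
  then show ?case by (simp add: map_idI)
qed

lemma valid_relabel:
  assumes s: "s permutes {1..m}"
  shows "valid_col m (\<lambda>i j. A (s i) (s j)) T = valid_col m A (relabel s T)"
proof (induction T)
  case (CNode c ts)
  have "(1 \<le> c \<and> c \<le> m) = (1 \<le> s c \<and> s c \<le> m)"
    using permutes_in_image[OF s, of c] by simp
  then show ?case using CNode by (auto simp: root_relabel)
qed

lemma root_count_perm:
  assumes s: "s permutes {1..m}"
  shows "t_col_root m (\<lambda>i j. A (s i) (s j)) c n = t_col_root m A (s c) n"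
proof -
  let ?X = "{T. valid_col m (\<lambda>i j. A (s i) (s j)) T \<and> nverts T = n \<and> root_col T = c}"
  let ?Y = "{T. valid_col m A T \<and> nverts T = n \<and> root_col T = s c}"
  have io: "inv s \<circ> s = id" "s \<circ> inv s = id" using permutes_inv_o[OF s] by auto
  have inj: "inj (relabel s)"
    by (rule inj_on_inverseI[where g = "relabel (inv s)"]) (simp add: relabel_comp io relabel_id)
  have si: "inv s (s c) = c" using io(1) by (metis comp_apply id_apply)
  have "relabel s ` ?X = ?Y"
  proof
    show "relabel s ` ?X \<subseteq> ?Y"
      using valid_relabel[OF s] by (auto simp: nverts_relabel root_relabel)
  next
    show "?Y \<subseteq> relabel s ` ?X"
    proof
      fix T assume T: "T \<in> ?Y"
      let ?U = "relabel (inv s) T"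
      have "relabel s ?U = T" by (simp add: relabel_comp io relabel_id)
      moreover have "?U \<in> ?X"
        using T valid_relabel[OF s, of A ?U] \<open>relabel s ?U = T\<close> si
        by (auto simp: nverts_relabel root_relabel)
      ultimately show "T \<in> relabel s ` ?X" using rev_image_eqI[of ?U ?X T "relabel s"] by simp
    qed
  qed
  moreover have "card (relabel s ` ?X) = card ?X"
    using card_image[OF inj_on_subset[OF inj subset_UNIV]] by blast
  ultimately show ?thesis unfolding t_col_root_def by simp
qed

lemma A_root3:
  assumes m: "m \<ge> 4"
  shows "t_col_root m (matA m) c 3 \<noteq> 2"
proof (cases "c = m")
  case True
  let ?L = "{xs. set xs \<subseteq> {1::nat,2} \<and> length xs = 2}"
  have eq: "{T. valid_col m (matA m) T \<and> nverts T = 3 \<and> root_col T = c}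
      = (\<lambda>xs. CNode m (map (\<lambda>c. CNode c []) xs)) ` ?L" (is "?A = ?B")
  proof (rule set_eqI, rule iffI)
    fix T assume "T \<in> ?A"
    then have v: "valid_col m (matA m) T \<and> nverts T = 3" and r: "root_col T = m" using True by auto
    from v A_char[OF m, of 3 T] have
      "(\<exists>c\<in>{3..m-1}. T = starT c 2 3) \<or>
      (\<exists>xs. length xs = 3 - 1 \<and> set xs \<subseteq> {1,2} \<and> T = CNode m (map (\<lambda>c. CNode c []) xs))" by simp
    then show "T \<in> ?B"
    proof
      assume "\<exists>c\<in>{3..m-1}. T = starT c 2 3"
      then obtain c' where "c' \<in> {3..m-1}" "T = starT c' 2 3" by blast
      then show ?thesis using r m by (simp add: starT_def)
    next
      assume "\<exists>xs. length xs = 3 - 1 \<and> set xs \<subseteq> {1,2} \<and> T = CNode m (map (\<lambda>c. CNode c []) xs)"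
      then obtain xs where "length xs = 2" "set xs \<subseteq> {1,2}" "T = CNode m (map (\<lambda>c. CNode c []) xs)" by auto
      then show ?thesis by blast
    qed
  next
    fix T assume "T \<in> ?B"
    then obtain xs where xs: "length xs = 2" "set xs \<subseteq> {1,2}" "T = CNode m (map (\<lambda>c. CNode c []) xs)" by blast
    then have "valid_col m (matA m) T \<and> nverts T = 3" using A_char[OF m, of 3 T] by auto
    then show "T \<in> ?A" using xs True by simp
  qed
  have i2: "inj_on (\<lambda>xs. CNode m (map (\<lambda>c. CNode c []) xs)) ?L"
    by (auto simp: inj_on_def inj_map_eq_map inj_def)
  have cL: "card ?L = 4" using card_lists_length_eq[of "{1::nat,2}" 2] by (simp add: numeral_2_eq_2 power2_eq_square)
  show ?thesis unfolding t_col_root_def eq using i2 cL by (simp add: card_image)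
next
  case False
  have "{T. valid_col m (matA m) T \<and> nverts T = 3 \<and> root_col T = c} \<subseteq> {starT c 2 3}"
  proof
    fix T assume "T \<in> {T. valid_col m (matA m) T \<and> nverts T = 3 \<and> root_col T = c}"
    then have v: "valid_col m (matA m) T \<and> nverts T = 3" and r: "root_col T = c" by auto
    from v A_char[OF m, of 3 T] have
      "(\<exists>c\<in>{3..m-1}. T = starT c 2 3) \<or>
      (\<exists>xs. length xs = 3 - 1 \<and> set xs \<subseteq> {1,2} \<and> T = CNode m (map (\<lambda>c. CNode c []) xs))" by simp
    then show "T \<in> {starT c 2 3}"
    proof
      assume "\<exists>c\<in>{3..m-1}. T = starT c 2 3"
      then obtain c' where "T = starT c' 2 3" by blast
      moreover then have "c' = c" using r by (simp add: starT_def)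
      ultimately show ?thesis by simp
    next
      assume "\<exists>xs. length xs = 3 - 1 \<and> set xs \<subseteq> {1,2} \<and> T = CNode m (map (\<lambda>c. CNode c []) xs)"
      then have "root_col T = m" by auto
      then show ?thesis using r False by simp
    qed
  qed
  then have "t_col_root m (matA m) c 3 \<le> 1" unfolding t_col_root_def
    by (metis card_mono finite.emptyI finite.insertI card_1_singleton_iff is_singletonI is_singleton_altdef)
  then show ?thesis by simp
qed

lemma B_root3:
  assumes m: "m \<ge> 4"
  shows "t_col_root m (matB m) 2 3 = 2"
proof -
  let ?f = "\<lambda>ps. CNode 2 (map (\<lambda>p. gT m (p - 1)) ps)"
  have eq: "{T. valid_col m (matB m) T \<and> nverts T = 3 \<and> root_col T = 2} = ?f ` compo 2"
    (is "?A = ?B")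
  proof (rule set_eqI, rule iffI)
    fix T assume "T \<in> ?A"
    then have v: "valid_col m (matB m) T \<and> nverts T = 3" and r: "root_col T = 2" by auto
    from v B_char[OF m, of 3 T] have
      "(\<exists>c\<in>{4..m}. T = starT c 1 3) \<or>
      (\<exists>c\<in>{2,3}. \<exists>ps\<in>compo (3 - 1). T = CNode c (map (\<lambda>p. gT m (p - 1)) ps))" by simp
    then show "T \<in> ?B"
    proof
      assume "\<exists>c\<in>{4..m}. T = starT c 1 3"
      then obtain c' where "c' \<in> {4..m}" "T = starT c' 1 3" by blast
      then show ?thesis using r by (simp add: starT_def)
    next
      assume "\<exists>c\<in>{2,3}. \<exists>ps\<in>compo (3 - 1). T = CNode c (map (\<lambda>p. gT m (p - 1)) ps)"
      then obtain c ps where "c \<in> {2,3}" "ps \<in> compo 2" "T = CNode c (map (\<lambda>p. gT m (p - 1)) ps)" by auto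
      moreover then have "c = 2" using r by simp
      ultimately show ?thesis by blast
    qed
  next
    fix T assume "T \<in> ?B"
    then obtain ps where ps: "ps \<in> compo 2" "T = ?f ps" by blast
    then have "valid_col m (matB m) T \<and> nverts T = 3" using B_char[OF m, of 3 T] by auto
    then show "T \<in> ?A" using ps by simp
  qed
  have i: "inj_on ?f (compo 2)"
  proof (rule inj_onI)
    fix x y assume "x \<in> compo 2" "y \<in> compo 2" "?f x = ?f y"
    then have "map (\<lambda>p. gT m (p - 1)) x = map (\<lambda>p. gT m (p - 1)) y"
      "\<forall>p\<in>set x. 0 < p" "\<forall>p\<in>set y. 0 < p" unfolding compo_def by auto
    then show "x = y" by (metis map_nverts_h)
  qed
  show ?thesis unfolding t_col_root_def eq using i compo_card[of 2] by (simp add: card_image)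
qed

theorem theorem37:
  fixes m :: nat
  assumes "m \<ge> 4"
  shows "(\<forall>n\<ge>2. t_col m (matA m) n = 2 ^ (n - 1) + m - 3 \<and>
                  t_col m (matB m) n = 2 ^ (n - 1) + m - 3)
       \<and> t_col m (matA m) 1 = m \<and> t_col m (matB m) 1 = m
       \<and> \<not> strongly_tc_equiv m (matA m) (matB m)"
proof (intro conjI allI impI)
  fix n :: nat assume "n \<ge> 2"
  then show "t_col m (matA m) n = 2 ^ (n - 1) + m - 3" "t_col m (matB m) n = 2 ^ (n - 1) + m - 3"
    using tA tB assms by auto
next
  show "t_col m (matA m) 1 = m" "t_col m (matB m) 1 = m" by (rule tcol1)+
next
  show "\<not> strongly_tc_equiv m (matA m) (matB m)"
  proof
    assume "strongly_tc_equiv m (matA m) (matB m)"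
    then obtain s where s: "s permutes {1..m}"
      and e: "strictly_tc_equiv m (\<lambda>i j. matA m (s i) (s j)) (matB m)"
      unfolding strongly_tc_equiv_def by blast
    have "t_col_root m (\<lambda>i j. matA m (s i) (s j)) 2 3 = t_col_root m (matB m) 2 3"
      using e assms unfolding strictly_tc_equiv_def by auto
    then have "t_col_root m (matA m) (s 2) 3 = 2"
      using root_count_perm[OF s] B_root3[OF assms] by simp
    then show False using A_root3[OF assms] by blast
  qed
qed

end
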